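(* Fix $\mu\in\mathbb{R}$, $\sigma>0$, $\beta\in[0,1]$, $\xi\in[\tfrac12,1]$. Then for every fixed $\lambda>0$ the positive welfare $W_P(t,\lambda)$ is nondecreasing in $t$ on $[0,\infty)$, and for every fixed $t\ge 0$ it is nondecreasing in $\lambda$ on $(0,\infty)$. If moreover $\beta>0$ and $\xi>\tfrac12$, then $W_P$ is strictly increasing in $t$ on $[0,\infty)$ (for fixed $\lambda>0$), and for every fixed $t>0$ it is strictly increasing in $\lambda$ on $(0,\infty)$.
   Context: Model: $p$ and $p_S$ are independent random variables, each distributed $\mathcal{N}(\mu,\sigma^2)$. Parameters: $\beta\in[0,1]$, $\xi\in[\tfrac12,1]$, intensity $\lambda>0$, time $t\ge 0$. Define the share of stereotypes $\eta_S=\eta_S(t,\lambda)=e^{-\lambda t}$ and $\eta_A=1-\eta_S$. The election outcome is the random variable $$\bar p=\eta_S\big(\beta p_S+(1-\beta)p\big)+\eta_A\big(\xi p+(1-\xi)(1-p)\big).$$ Let $\hat p=\mathbb{E}[p\mid \bar p]$. The positive welfare is $W_P(t,\lambda)=-\mathbb{E}[(\hat p-p)^2]$, the institutional welfare is $W_I(t,\lambda)=-\mathbb{E}[(\bar p-p)^2]$, and the bias is $B(t,\lambda)=\mathbb{E}[(\bar p-\hat p)^2]$ (expectations over the joint distribution of $(p,p_S)$). *)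

theory Defs
  imports "HOL-Probability.Probability"
begin

definition etaS :: "real \<Rightarrow> real \<Rightarrow> real" where
  "etaS t l = exp (- l * t)"

definition pbar :: "real \<Rightarrow> real \<Rightarrow> real \<Rightarrow> real \<Rightarrow> ('a \<Rightarrow> real) \<Rightarrow> ('a \<Rightarrow> real) \<Rightarrow> 'a \<Rightarrow> real" where
  "pbar \<beta> \<xi> t l p pS \<omega> =
     etaS t l * (\<beta> * pS \<omega> + (1 - \<beta>) * p \<omega>)
     + (1 - etaS t l) * (\<xi> * p \<omega> + (1 - \<xi>) * (1 - p \<omega>))"

definition WP :: "'a measure \<Rightarrow> real \<Rightarrow> real \<Rightarrow> ('a \<Rightarrow> real) \<Rightarrow> ('a \<Rightarrow> real) \<Rightarrow> real \<Rightarrow> real \<Rightarrow> real" where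
  "WP M \<beta> \<xi> p pS t l =
     - (\<integral>\<omega>. (real_cond_exp M (vimage_algebra (space M) (pbar \<beta> \<xi> t l p pS) borel) p \<omega> - p \<omega>)\<^sup>2 \<partial>M)"

end

theory Submission
  imports Defs
begin


lemma odd_integral_zero:
  fixes f :: "real \<Rightarrow> real"
  assumes "\<And>z. f (m - z) = - f (m + z)"
  shows "integral\<^sup>L lborel f = 0"
proof -
  have 1: "integral\<^sup>L lborel f = (\<integral>z. f (m + 1  *  z) \<partial>lborel)"
    using lborel_integral_real_affine[of 1 f m] by simp
  have 2: "integral\<^sup>L lborel f = (\<integral>z. f (m + (-1)  *  z) \<partial>lborel)"
    using lborel_integral_real_affine[of "-1" f m] by simp
  have "(\<integral>z. f (m + (-1)  *  z) \<partial>lborel) = (\<integral>z. - f (m + z) \<partial>lborel)"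
    using assms by simp
  also have "\<dots> = - (\<integral>z. f (m + z) \<partial>lborel)" by simp
  finally show ?thesis using 1 2 by simp
qed

lemma nd_prod:
  "normal_density \<mu> \<sigma> x  *  normal_density \<mu> \<sigma> y =
   exp (-((x-\<mu>)\<^sup>2 + (y-\<mu>)\<^sup>2) / (2 * \<sigma>\<^sup>2)) / (sqrt (2 * pi * \<sigma>\<^sup>2))\<^sup>2"
  unfolding normal_density_def
  by (simp add: exp_add[symmetric] power2_eq_square add_divide_distrib diff_divide_distrib)

lemma alg1:
  fixes a b s v z :: real
  assumes b: "b \<noteq> 0" and k: "s * b\<^sup>2 = a * (v - a * s)"
  shows "(s - z)\<^sup>2 + ((v - a * (s-z))/b)\<^sup>2 = (s+z)\<^sup>2 + ((v - a * (s+z))/b)\<^sup>2"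
proof -
  have "((v - a * (s-z))/b)\<^sup>2 - ((v - a * (s+z))/b)\<^sup>2 = ((v - a * (s-z))\<^sup>2 - (v - a * (s+z))\<^sup>2)/b\<^sup>2"
    unfolding power_divide by (rule diff_divide_distrib[symmetric])
  also have "(v - a * (s-z))\<^sup>2 - (v - a * (s+z))\<^sup>2 = 4 * z * (a * (v - a * s))"
    by (simp add: power2_eq_square algebra_simps)
  also have "\<dots> = 4 * z * (s * b\<^sup>2)" using k by simp
  also have "4 * z * (s * b\<^sup>2)/b\<^sup>2 = 4 * z * s" using b by simp
  finally have "((v - a * (s-z))/b)\<^sup>2 - ((v - a * (s+z))/b)\<^sup>2 = 4 * z * s" .
  moreover have "(s+z)\<^sup>2 - (s - z)\<^sup>2 = 4 * z * s" by (simp add: power2_eq_square algebra_simps)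
  ultimately show ?thesis by linarith
qed

lemma alg2:
  fixes a b s v z :: real
  assumes b: "b \<noteq> 0" and k: "s * b\<^sup>2 = a * (v - a * s)"
  shows "b * (s-z) - a * ((v - a * (s-z))/b) = - (b * (s+z) - a * ((v - a * (s+z))/b))"
proof -
  have e1: "b * (s-z) - a * ((v - a * (s-z))/b) = (b\<^sup>2 * (s-z) - a * (v - a * (s-z)))/b"
    using b by (simp add: field_simps power2_eq_square)
  have e2: "b * (s+z) - a * ((v - a * (s+z))/b) = (b\<^sup>2 * (s+z) - a * (v - a * (s+z)))/b"
    using b by (simp add: field_simps power2_eq_square)
  have e3: "(b\<^sup>2 * (s-z) - a * (v - a * (s-z))) - (- (b\<^sup>2 * (s+z) - a * (v - a * (s+z)))) = 2 * (s * b\<^sup>2 - a * (v - a * s))"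
    by (simp add: algebra_simps power2_eq_square)
  have "(b\<^sup>2 * (s-z) - a * (v - a * (s-z))) = (- (b\<^sup>2 * (s+z) - a * (v - a * (s+z))))"
    using e3 k by simp
  then show ?thesis unfolding e1 e2 by (simp add: minus_divide_left)
qed

lemma neg_helper: "(E::real) * (A - B) / K = - (E * (B - A) / K)"
  by (metis minus_diff_eq minus_divide_left mult_minus_right)

lemma inner_zero:
  fixes a b c \<mu> \<sigma> u :: real
  assumes b: "b \<noteq> 0"
  shows "(\<integral>x. normal_density \<mu> \<sigma> x  *  normal_density \<mu> \<sigma> ((u - a * x - c)/b)  * 
            (b * (x-\<mu>) - a * ((u - a * x - c)/b - \<mu>)) \<partial>lborel) = 0"
proof -
  define Dd where "Dd = a\<^sup>2 + b\<^sup>2"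
  have Dd: "Dd > 0" using b unfolding Dd_def by (simp add: add_nonneg_pos)
  define v where "v = u - c - (a+b) * \<mu>"
  define s where "s = a  *  v / Dd"
  have h: "s * Dd = a * v" using Dd by (simp add: s_def)
  have h2: "a * (a * s) + b * (b * s) = a * v" using h unfolding Dd_def by (simp add: algebra_simps power2_eq_square)
  have k: "s * b\<^sup>2 = a * (v - a * s)"
    using h2 by (simp add: algebra_simps power2_eq_square)
  have y: "\<And>z. (u - a * (\<mu> + s + z) - c)/b - \<mu> = (v - a * (s+z))/b"
    using b unfolding v_def by (simp add: field_simps)
  have y': "\<And>z. (u - a * (\<mu> + s - z) - c)/b - \<mu> = (v - a * (s-z))/b"
    using b unfolding v_def by (simp add: field_simps)
  show ?thesis
  proof (rule odd_integral_zero[where m = "\<mu> + s"])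
    fix z
    have e: "((\<mu> + s - z) - \<mu>)\<^sup>2 + ((u - a * (\<mu> + s - z) - c)/b - \<mu>)\<^sup>2 =
           ((\<mu> + s + z) - \<mu>)\<^sup>2 + ((u - a * (\<mu> + s + z) - c)/b - \<mu>)\<^sup>2"
      unfolding y y' using alg1[OF b k, of z] by (simp add: algebra_simps)
    have w: "b * ((\<mu> + s - z)-\<mu>) - a * ((u - a * (\<mu> + s - z) - c)/b - \<mu>) =
             - (b * ((\<mu> + s + z)-\<mu>) - a * ((u - a * (\<mu> + s + z) - c)/b - \<mu>))"
      unfolding y y' using alg2[OF b k, of z] by (simp add: algebra_simps)
    show "normal_density \<mu> \<sigma> (\<mu> + s - z)  *  normal_density \<mu> \<sigma> ((u - a * (\<mu> + s - z) - c)/b)  * 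
            (b * ((\<mu> + s - z)-\<mu>) - a * ((u - a * (\<mu> + s - z) - c)/b - \<mu>)) =
          - (normal_density \<mu> \<sigma> (\<mu> + s + z)  *  normal_density \<mu> \<sigma> ((u - a * (\<mu> + s + z) - c)/b)  * 
            (b * ((\<mu> + s + z)-\<mu>) - a * ((u - a * (\<mu> + s + z) - c)/b - \<mu>)))"
      unfolding nd_prod e w by simp (rule neg_helper)
  qed
qed


definition HH :: "real \<Rightarrow> real \<Rightarrow> real \<Rightarrow> real \<Rightarrow> real \<Rightarrow> real set \<Rightarrow> real \<Rightarrow> real \<Rightarrow> real" where
  "HH \<mu> \<sigma> a b c B x y = normal_density \<mu> \<sigma> x * normal_density \<mu> \<sigma> y *
     (indicator B (a * x + b * y + c) * (b * (x - \<mu>) - a * (y - \<mu>)))"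

lemma HH_meas[measurable]: assumes [measurable]: "B \<in> sets borel" shows "(\<lambda>z. HH \<mu> \<sigma> a b c B (fst z) (snd z)) \<in> borel_measurable (lborel \<Otimes>\<^sub>M lborel)"
  unfolding HH_def by measurable

lemma key_zero:
  fixes a b c \<mu> \<sigma> :: real and B :: "real set"
  assumes b: "b \<noteq> 0" and B[measurable]: "B \<in> sets borel"
    and int: "integrable (lborel \<Otimes>\<^sub>M lborel) (\<lambda>z. HH \<mu> \<sigma> a b c B (fst z) (snd z))"
  shows "(\<integral>z. HH \<mu> \<sigma> a b c B (fst z) (snd z) \<partial>(lborel \<Otimes>\<^sub>M lborel)) = 0"
proof -
  define G where "G x u = \<bar>1/b\<bar> * HH \<mu> \<sigma> a b c B x ((u - a * x - c)/b)" for x u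
  have arg: "\<And>x u. - (a * x + c)/b + 1/b * u = (u - a * x - c)/b"
    using b by (simp add: field_simps)
  have inner: "(\<integral>y. HH \<mu> \<sigma> a b c B x y \<partial>lborel) = (\<integral>u. G x u \<partial>lborel)" for x
    using lborel_integral_real_affine[of "1/b" "HH \<mu> \<sigma> a b c B x" "- (a * x + c)/b"] b
    unfolding G_def arg by simp
  have Gmeas[measurable]: "(\<lambda>z. G (fst z) (snd z)) \<in> borel_measurable (lborel \<Otimes>\<^sub>M lborel)"
    unfolding G_def HH_def by measurable
  have nnH: "(\<integral>\<^sup>+y. ennreal (norm (HH \<mu> \<sigma> a b c B x y)) \<partial>lborel) =
       (\<integral>\<^sup>+u. ennreal (norm (G x u)) \<partial>lborel)" for x
  proof -
    have "(\<integral>\<^sup>+y. ennreal (norm (HH \<mu> \<sigma> a b c B x y)) \<partial>lborel) =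
        \<bar>1/b\<bar> * (\<integral>\<^sup>+u. ennreal (norm (HH \<mu> \<sigma> a b c B x (- (a * x + c)/b + 1/b * u))) \<partial>lborel)"
      using b by (intro nn_integral_real_affine) (auto simp: HH_def)
    also have "\<dots> = (\<integral>\<^sup>+u. ennreal \<bar>1/b\<bar> * ennreal (norm (HH \<mu> \<sigma> a b c B x ((u - a * x - c)/b))) \<partial>lborel)"
      unfolding arg by (rule nn_integral_cmult[symmetric]) (auto simp: HH_def)
    also have "\<dots> = (\<integral>\<^sup>+u. ennreal (norm (G x u)) \<partial>lborel)"
      unfolding G_def by (intro nn_integral_cong) (simp add: ennreal_mult[symmetric] abs_mult)
    finally show ?thesis .
  qed
  have intG: "integrable (lborel \<Otimes>\<^sub>M lborel) (\<lambda>z. G (fst z) (snd z))"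
  proof (rule integrableI_bounded)
    have "(\<integral>\<^sup>+z. ennreal (norm (G (fst z) (snd z))) \<partial>(lborel \<Otimes>\<^sub>M lborel)) =
          (\<integral>\<^sup>+x. \<integral>\<^sup>+u. ennreal (norm (G x u)) \<partial>lborel \<partial>lborel)"
      by (subst lborel.nn_integral_fst[symmetric]) auto
    also have "\<dots> = (\<integral>\<^sup>+x. \<integral>\<^sup>+y. ennreal (norm (HH \<mu> \<sigma> a b c B x y)) \<partial>lborel \<partial>lborel)"
      by (simp only: nnH)
    also have "\<dots> = (\<integral>\<^sup>+z. ennreal (norm (HH \<mu> \<sigma> a b c B (fst z) (snd z))) \<partial>(lborel \<Otimes>\<^sub>M lborel))"
      by (subst lborel.nn_integral_fst[symmetric]) auto
    also have "\<dots> < \<infinity>" using int by (simp add: integrable_iff_bounded)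
    finally show "(\<integral>\<^sup>+z. ennreal (norm (G (fst z) (snd z))) \<partial>(lborel \<Otimes>\<^sub>M lborel)) < \<infinity>" .
  qed simp
  have Gx: "(\<integral>x. G x u \<partial>lborel) = 0" for u
  proof -
    have "G x u = \<bar>1/b\<bar> * indicator B u * (normal_density \<mu> \<sigma> x * normal_density \<mu> \<sigma> ((u - a*x - c)/b) *
            (b*(x-\<mu>) - a*((u - a*x - c)/b - \<mu>)))" for x
    proof -
      have "a * x + b * ((u - a * x - c)/b) + c = u" using b by (simp add: field_simps)
      then show ?thesis unfolding G_def HH_def by simp
    qed
    then show ?thesis using inner_zero[OF b, of \<mu> \<sigma> u a c] by simp
  qed
  have "(\<integral>z. HH \<mu> \<sigma> a b c B (fst z) (snd z) \<partial>(lborel \<Otimes>\<^sub>M lborel)) =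
        (\<integral>x. \<integral>y. HH \<mu> \<sigma> a b c B x y \<partial>lborel \<partial>lborel)"
    using lborel_pair.integral_fst'[OF int] by simp
  also have "\<dots> = (\<integral>x. \<integral>u. G x u \<partial>lborel \<partial>lborel)" by (simp add: inner)
  also have "\<dots> = (\<integral>u. \<integral>x. G x u \<partial>lborel \<partial>lborel)"
    using lborel_pair.Fubini_integral[of G] intG by (simp add: case_prod_beta')
  also have "\<dots> = 0" by (simp add: Gx)
  finally show ?thesis .
qed




lemma (in prob_space) mse:
  fixes p q :: "'a \<Rightarrow> real" and \<mu> \<sigma> a b c :: real
  assumes \<sigma>: "\<sigma> > 0"
    and dp: "distributed M lborel p (normal_density \<mu> \<sigma>)"
    and dq: "distributed M lborel q (normal_density \<mu> \<sigma>)"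
    and ind: "indep_var borel p borel q"
    and Dpos: "a\<^sup>2 + b\<^sup>2 > 0"
  shows "(\<integral>\<omega>. (real_cond_exp M (vimage_algebra (space M) (\<lambda>\<omega>. a * p \<omega> + b * q \<omega> + c) borel) p \<omega> - p \<omega>)\<^sup>2 \<partial>M)
         = \<sigma>\<^sup>2 * b\<^sup>2 / (a\<^sup>2 + b\<^sup>2)"
proof -
  define Dd where "Dd = a\<^sup>2 + b\<^sup>2"
  have Dd: "Dd > 0" using Dpos by (simp add: Dd_def)
  define X where "X \<omega> = a * p \<omega> + b * q \<omega> + c" for \<omega>
  define F where "F = vimage_algebra (space M) X borel"
  have pm[measurable]: "p \<in> borel_measurable M" using distributed_measurable[OF dp] by simp
  have qm[measurable]: "q \<in> borel_measurable M" using distributed_measurable[OF dq] by simp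
  have Xm[measurable]: "X \<in> borel_measurable M" unfolding X_def by measurable
  have XF: "X \<in> borel_measurable F" unfolding F_def by (rule measurable_vimage_algebra1) auto
  have setsF: "sets F = {X -` B \<inter> space M | B. B \<in> sets borel}"
    unfolding F_def by (rule sets_vimage_algebra2) auto
  have subalg: "subalgebra M F"
    unfolding subalgebra_def using setsF Xm by (auto simp: F_def measurable_sets)
  interpret fms: finite_measure_subalgebra M F
    by unfold_locales (rule subalg)
  have nd0: "\<And>x. 0 \<le> normal_density \<mu> \<sigma> x" by (rule normal_density_nonneg)
  have intp: "integrable M p"
    using distributed_integrable_var[OF dp nd0 integrable_normal_moment_nz_1[OF \<sigma>]] .
  have intq: "integrable M q"
    using distributed_integrable_var[OF dq nd0 integrable_normal_moment_nz_1[OF \<sigma>]] .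
  have Ep: "expectation p = \<mu>" by (rule normal_distributed_expectation[OF \<sigma> dp])
  have Eq: "expectation q = \<mu>" by (rule normal_distributed_expectation[OF \<sigma> dq])
  define g where "g \<omega> = \<mu> + a * (X \<omega> - (a+b)*\<mu> - c)/Dd" for \<omega>
  have gF: "g \<in> borel_measurable F" unfolding g_def using XF by measurable
  have gm[measurable]: "g \<in> borel_measurable M" unfolding g_def by measurable
  have intg: "integrable M g" unfolding g_def X_def using intp intq by auto
  have pg: "p \<omega> - g \<omega> = (b/Dd) * (b * (p \<omega> - \<mu>) - a * (q \<omega> - \<mu>))" for \<omega>
  proof -
    have gD: "Dd * g \<omega> = Dd*\<mu> + a*(X \<omega> - (a+b)*\<mu> - c)" unfolding g_def using Dd by (simp add: distrib_left)
    have "Dd * (p \<omega> - g \<omega>) = b * (b * (p \<omega> - \<mu>) - a * (q \<omega> - \<mu>))"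
      using gD unfolding X_def Dd_def by (simp add: algebra_simps power2_eq_square)
    then show ?thesis using Dd by (simp add: field_simps)
  qed
  have dj0: "distributed M (lborel \<Otimes>\<^sub>M lborel) (\<lambda>\<omega>. (p \<omega>, q \<omega>))
      (\<lambda>(x, y). ennreal (normal_density \<mu> \<sigma> x) * ennreal (normal_density \<mu> \<sigma> y))"
  proof -
    have s: "\<And>i. sets (case_bool lborel lborel i) = sets (case_bool borel borel i)" by (case_tac i) auto
    have m: "\<And>i. measurable M (case_bool lborel lborel i) = measurable M (case_bool borel borel i)" by (case_tac i) auto
    have "indep_var lborel p lborel q" using ind unfolding indep_var_def indep_vars_def2 s m .
    then show ?thesis
      by (rule distributed_joint_indep[OF lborel.sigma_finite_measure_axioms lborel.sigma_finite_measure_axioms dp dq])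
  qed
  have deq: "(\<lambda>(x, y). ennreal (normal_density \<mu> \<sigma> x) * ennreal (normal_density \<mu> \<sigma> y)) =
      (\<lambda>z. ennreal (normal_density \<mu> \<sigma> (fst z) * normal_density \<mu> \<sigma> (snd z)))"
    by (simp add: fun_eq_iff ennreal_mult nd0)
  have dj: "distributed M (lborel \<Otimes>\<^sub>M lborel) (\<lambda>\<omega>. (p \<omega>, q \<omega>))
      (\<lambda>z. ennreal (normal_density \<mu> \<sigma> (fst z) * normal_density \<mu> \<sigma> (snd z)))"
    using dj0 unfolding deq .
  have intW: "integrable M (\<lambda>\<omega>. b*(p \<omega>-\<mu>) - a*(q \<omega>-\<mu>))" using intp intq by auto
  have key: "(\<integral>\<omega>. indicator B (X \<omega>) * (b*(p \<omega>-\<mu>) - a*(q \<omega>-\<mu>)) \<partial>M) = 0"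
    and intIW: "integrable M (\<lambda>\<omega>. indicator B (X \<omega>) * (b*(p \<omega>-\<mu>) - a*(q \<omega>-\<mu>)))"
    if B[measurable]: "B \<in> sets borel" and b: "b \<noteq> 0" for B
  proof -
    have "integrable M (\<lambda>\<omega>. indicator (X -` B \<inter> space M) \<omega> *\<^sub>R (b*(p \<omega>-\<mu>) - a*(q \<omega>-\<mu>)))"
      by (rule integrable_mult_indicator) (auto intro: intW)
    then show int1: "integrable M (\<lambda>\<omega>. indicator B (X \<omega>) * (b*(p \<omega>-\<mu>) - a*(q \<omega>-\<mu>)))"
      by (rule Bochner_Integration.integrable_cong[OF refl, THEN iffD1, rotated]) (auto simp: indicator_def)
    define gg where "gg z = indicator B (a * fst z + b * snd z + c) * (b * (fst z - \<mu>) - a * (snd z - \<mu>))" for z :: "real \<times> real"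
    have ggm[measurable]: "gg \<in> borel_measurable (lborel \<Otimes>\<^sub>M lborel)" unfolding gg_def by measurable
    have eqH: "(\<lambda>z. normal_density \<mu> \<sigma> (fst z) * normal_density \<mu> \<sigma> (snd z) * gg z) =
        (\<lambda>z. HH \<mu> \<sigma> a b c B (fst z) (snd z))"
      by (simp add: fun_eq_iff gg_def HH_def)
    have ggX: "(\<lambda>\<omega>. gg (p \<omega>, q \<omega>)) = (\<lambda>\<omega>. indicator B (X \<omega>) * (b*(p \<omega>-\<mu>) - a*(q \<omega>-\<mu>)))"
      by (simp add: fun_eq_iff gg_def X_def)
    have iH: "integrable (lborel \<Otimes>\<^sub>M lborel) (\<lambda>z. HH \<mu> \<sigma> a b c B (fst z) (snd z))"
      using distributed_integrable[OF dj ggm] int1 unfolding eqH ggX by (simp add: nd0)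
    have "(\<integral>\<omega>. indicator B (X \<omega>) * (b*(p \<omega>-\<mu>) - a*(q \<omega>-\<mu>)) \<partial>M) =
          (\<integral>z. HH \<mu> \<sigma> a b c B (fst z) (snd z) \<partial>(lborel \<Otimes>\<^sub>M lborel))"
      using distributed_integral[OF dj ggm] unfolding eqH ggX by (simp add: nd0)
    also have "\<dots> = 0" by (rule key_zero[OF b B iH])
    finally show "(\<integral>\<omega>. indicator B (X \<omega>) * (b*(p \<omega>-\<mu>) - a*(q \<omega>-\<mu>)) \<partial>M) = 0" .
  qed
  have ce: "AE \<omega> in M. real_cond_exp M F p \<omega> = g \<omega>"
  proof (rule fms.real_cond_exp_charact)
    fix A assume "A \<in> sets F"
    then obtain B where B[measurable]: "B \<in> sets borel" and AB: "A = X -` B \<inter> space M" using setsF by auto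
    have A_M[measurable]: "A \<in> sets M" unfolding AB by measurable
    have intAp: "integrable M (\<lambda>x. indicator A x * p x)" using integrable_mult_indicator[OF A_M intp] by simp
    have intAg: "integrable M (\<lambda>x. indicator A x * g x)" using integrable_mult_indicator[OF A_M intg] by simp
    have "(\<integral>x\<in>A. p x \<partial>M) - (\<integral>x\<in>A. g x \<partial>M) = (\<integral>x. indicator A x * p x - indicator A x * g x \<partial>M)"
      unfolding set_lebesgue_integral_def using intAp intAg by (simp add: Bochner_Integration.integral_diff)
    also have "\<dots> = (\<integral>x. indicator B (X x) * (p x - g x) \<partial>M)"
      by (rule Bochner_Integration.integral_cong) (auto simp: AB indicator_def)
    also have "\<dots> = 0"
    proof (cases "b = 0")
      case True then show ?thesis by (simp add: pg)
    next
      case False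
      have "(\<integral>x. indicator B (X x) * (p x - g x) \<partial>M) =
            (\<integral>x. (b/Dd) * (indicator B (X x) * (b*(p x-\<mu>) - a*(q x-\<mu>))) \<partial>M)"
        by (rule Bochner_Integration.integral_cong) (auto simp: pg)
      also have "\<dots> = (b/Dd) * (\<integral>x. indicator B (X x) * (b*(p x-\<mu>) - a*(q x-\<mu>)) \<partial>M)"
        by simp
      also have "\<dots> = 0" using key[OF B False] by simp
      finally show ?thesis .
    qed
    finally show "(\<integral>x\<in>A. p x \<partial>M) = (\<integral>x\<in>A. g x \<partial>M)" by simp
  qed (auto simp: intp intg gF)
  have eq1: "(\<integral>\<omega>. (real_cond_exp M F p \<omega> - p \<omega>)\<^sup>2 \<partial>M) = (\<integral>\<omega>. (g \<omega> - p \<omega>)\<^sup>2 \<partial>M)"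
    by (rule integral_cong_AE) (use ce in auto)
  define P where "P \<omega> = p \<omega> - \<mu>" for \<omega>
  define Q where "Q \<omega> = q \<omega> - \<mu>" for \<omega>
  have gp2: "(g \<omega> - p \<omega>)\<^sup>2 = (b/Dd)\<^sup>2 * (b\<^sup>2 * (P \<omega>)\<^sup>2 + (-2*a*b) * (P \<omega> * Q \<omega>) + a\<^sup>2 * (Q \<omega>)\<^sup>2)" for \<omega>
  proof -
    have "(g \<omega> - p \<omega>)\<^sup>2 = (p \<omega> - g \<omega>)\<^sup>2" by (simp add: power2_commute)
    also have "\<dots> = (b/Dd)\<^sup>2 * (b * P \<omega> - a * Q \<omega>)\<^sup>2" unfolding pg P_def Q_def by (simp only: power_mult_distrib)
    also have "(b * P \<omega> - a * Q \<omega>)\<^sup>2 = b\<^sup>2 * (P \<omega>)\<^sup>2 + (-2*a*b) * (P \<omega> * Q \<omega>) + a\<^sup>2 * (Q \<omega>)\<^sup>2"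
      by (simp add: power2_eq_square algebra_simps)
    finally show ?thesis .
  qed
  have intP2: "integrable M (\<lambda>\<omega>. (P \<omega>)\<^sup>2)"
    using distributed_integrable[OF dp, of "\<lambda>x. (x-\<mu>)^2"] integrable_normal_moment[of \<sigma> \<mu> 2] \<sigma>
    unfolding P_def by (simp add: nd0)
  have intQ2: "integrable M (\<lambda>\<omega>. (Q \<omega>)\<^sup>2)"
    using distributed_integrable[OF dq, of "\<lambda>x. (x-\<mu>)^2"] integrable_normal_moment[of \<sigma> \<mu> 2] \<sigma>
    unfolding Q_def by (simp add: nd0)
  have EP2: "(\<integral>\<omega>. (P \<omega>)\<^sup>2 \<partial>M) = \<sigma>\<^sup>2"
    using normal_distributed_variance[OF \<sigma> dp] Ep unfolding P_def by simp
  have EQ2: "(\<integral>\<omega>. (Q \<omega>)\<^sup>2 \<partial>M) = \<sigma>\<^sup>2"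
    using normal_distributed_variance[OF \<sigma> dq] Eq unfolding Q_def by simp
  have intP: "integrable M P" unfolding P_def using intp by simp
  have intQ: "integrable M Q" unfolding Q_def using intq by simp
  have EP: "(\<integral>\<omega>. P \<omega> \<partial>M) = 0" unfolding P_def using intp Ep prob_space by simp
  have indPQ: "indep_var borel P borel Q"
    using indep_var_compose[OF ind, of "\<lambda>x. x - \<mu>" borel "\<lambda>x. x - \<mu>" borel]
    unfolding P_def Q_def comp_def by simp
  have intPQ: "integrable M (\<lambda>\<omega>. P \<omega> * Q \<omega>)" by (rule indep_var_integrable[OF indPQ intP intQ])
  have EPQ: "(\<integral>\<omega>. P \<omega> * Q \<omega> \<partial>M) = 0"
    using indep_var_lebesgue_integral[OF indPQ intP intQ] EP by simp
  have "(\<integral>\<omega>. (g \<omega> - p \<omega>)\<^sup>2 \<partial>M) =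
      (b/Dd)\<^sup>2 * (b\<^sup>2 * (\<integral>\<omega>. (P \<omega>)\<^sup>2 \<partial>M) + (-2*a*b) * (\<integral>\<omega>. P \<omega> * Q \<omega> \<partial>M) + a\<^sup>2 * (\<integral>\<omega>. (Q \<omega>)\<^sup>2 \<partial>M))"
    unfolding gp2 using intP2 intQ2 intPQ by simp
  also have "\<dots> = (b/Dd)\<^sup>2 * (Dd * \<sigma>\<^sup>2)"
    unfolding EP2 EQ2 EPQ Dd_def by (simp add: algebra_simps)
  also have "\<dots> = \<sigma>\<^sup>2 * b\<^sup>2 / Dd"
    using Dd by (simp add: power2_eq_square field_simps)
  also have "\<dots> = \<sigma>\<^sup>2 * b\<^sup>2 / (a\<^sup>2 + b\<^sup>2)" unfolding Dd_def ..
  finally show ?thesis using eq1 unfolding F_def X_def by simp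
qed




lemma frac_cmp:
  fixes a1 b1 a2 b2 :: real
  assumes D1: "a1\<^sup>2 + b1\<^sup>2 > 0" and D2: "a2\<^sup>2 + b2\<^sup>2 > 0" and "0 \<le> a1" "0 \<le> b2"
    and le: "b2 * a1 \<le> b1 * a2"
  shows "b2\<^sup>2 / (a2\<^sup>2 + b2\<^sup>2) \<le> b1\<^sup>2 / (a1\<^sup>2 + b1\<^sup>2)"
proof -
  have "(b2 * a1)\<^sup>2 \<le> (b1 * a2)\<^sup>2" using le assms(3,4) by (intro power_mono) auto
  then have "b2\<^sup>2 * (a1\<^sup>2 + b1\<^sup>2) \<le> b1\<^sup>2 * (a2\<^sup>2 + b2\<^sup>2)" by (simp add: power_mult_distrib algebra_simps)
  then show ?thesis using D1 D2 by (simp add: divide_le_eq le_divide_eq mult.commute)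
qed

lemma frac_cmp_strict:
  fixes a1 b1 a2 b2 :: real
  assumes D1: "a1\<^sup>2 + b1\<^sup>2 > 0" and D2: "a2\<^sup>2 + b2\<^sup>2 > 0" and "0 \<le> a1" "0 \<le> b2"
    and le: "b2 * a1 < b1 * a2"
  shows "b2\<^sup>2 / (a2\<^sup>2 + b2\<^sup>2) < b1\<^sup>2 / (a1\<^sup>2 + b1\<^sup>2)"
proof -
  have "(b2 * a1)\<^sup>2 < (b1 * a2)\<^sup>2" using le assms(3,4) by (intro power_strict_mono) auto
  then have "b2\<^sup>2 * (a1\<^sup>2 + b1\<^sup>2) < b1\<^sup>2 * (a2\<^sup>2 + b2\<^sup>2)" by (simp add: power_mult_distrib algebra_simps)
  then show ?thesis using D1 D2 by (simp add: divide_less_eq less_divide_eq mult.commute)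
qed

definition Rf :: "real \<Rightarrow> real \<Rightarrow> real \<Rightarrow> real" where
  "Rf \<beta> \<xi> e = (e * \<beta>)\<^sup>2 / ((e * (1-\<beta>) + (1-e) * (2*\<xi>-1))\<^sup>2 + (e * \<beta>)\<^sup>2)"

lemma Dpos:
  fixes \<beta> \<xi> e :: real
  assumes "0 \<le> \<beta>" "\<beta> \<le> 1" "1/2 \<le> \<xi>" "0 < e" "e \<le> 1"
  shows "(e * (1-\<beta>) + (1-e) * (2*\<xi>-1))\<^sup>2 + (e * \<beta>)\<^sup>2 > 0"
    and "0 \<le> e * (1-\<beta>) + (1-e) * (2*\<xi>-1)"
proof -
  have x: "0 \<le> 2*\<xi>-1" "0 \<le> 1-e" "0 \<le> 1-\<beta>" using assms by auto
  show a0: "0 \<le> e * (1-\<beta>) + (1-e) * (2*\<xi>-1)" using x assms by simp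
  show "(e * (1-\<beta>) + (1-e) * (2*\<xi>-1))\<^sup>2 + (e * \<beta>)\<^sup>2 > 0"
  proof (cases "\<beta> = 0")
    case True
    have "0 \<le> (1-e) * (2*\<xi>-1)" using x by simp
    moreover have "e * (1-\<beta>) = e" using True by simp
    ultimately have "e * (1-\<beta>) + (1-e) * (2*\<xi>-1) > 0" using assms by linarith
    then show ?thesis by (simp add: add_pos_nonneg)
  next
    case False
    then have "e * \<beta> \<noteq> 0" using assms by simp
    then show ?thesis by (simp add: add_nonneg_pos)
  qed
qed

lemma Rf_mono:
  fixes \<beta> \<xi> e1 e2 :: real
  assumes "0 \<le> \<beta>" "\<beta> \<le> 1" "1/2 \<le> \<xi>" "\<xi> \<le> 1" "0 < e2" "e2 \<le> e1" "e1 \<le> 1"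
  shows "Rf \<beta> \<xi> e2 \<le> Rf \<beta> \<xi> e1"
    and "\<beta> > 0 \<Longrightarrow> \<xi> > 1/2 \<Longrightarrow> e2 < e1 \<Longrightarrow> Rf \<beta> \<xi> e2 < Rf \<beta> \<xi> e1"
proof -
  define d where "d = 2*\<xi>-1"
  define a1 where "a1 = e1 * (1-\<beta>) + (1-e1) * d"
  define a2 where "a2 = e2 * (1-\<beta>) + (1-e2) * d"
  have D1: "a1\<^sup>2 + (e1*\<beta>)\<^sup>2 > 0" and a1: "0 \<le> a1"
    using Dpos[of \<beta> \<xi> e1] assms unfolding a1_def d_def by auto
  have D2: "a2\<^sup>2 + (e2*\<beta>)\<^sup>2 > 0" and a2: "0 \<le> a2"
    using Dpos[of \<beta> \<xi> e2] assms unfolding a2_def d_def by auto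
  have diff: "(e1*\<beta>) * a2 - (e2*\<beta>) * a1 = \<beta> * d * (e1 - e2)"
    unfolding a1_def a2_def by (simp add: algebra_simps)
  have b2: "0 \<le> e2 * \<beta>" using assms by simp
  have dn: "0 \<le> d" using assms unfolding d_def by simp
  have "0 \<le> \<beta> * d * (e1 - e2)" using assms dn by simp
  then have "(e2*\<beta>) * a1 \<le> (e1*\<beta>) * a2" using diff by linarith
  from frac_cmp[OF D1 D2 a1 b2 this]
  show "Rf \<beta> \<xi> e2 \<le> Rf \<beta> \<xi> e1" unfolding Rf_def a1_def a2_def d_def .
  assume h: "\<beta> > 0" "\<xi> > 1/2" "e2 < e1"
  have "0 < \<beta> * d * (e1 - e2)" using h unfolding d_def by simp
  then have "(e2*\<beta>) * a1 < (e1*\<beta>) * a2" using diff by linarith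
  from frac_cmp_strict[OF D1 D2 a1 b2 this]
  show "Rf \<beta> \<xi> e2 < Rf \<beta> \<xi> e1" unfolding Rf_def a1_def a2_def d_def .
qed




lemma WP_val:
  fixes M :: "'a measure" and p pS :: "'a \<Rightarrow> real" and \<mu> \<sigma> \<beta> \<xi> t l :: real
  assumes "prob_space M" and \<sigma>: "\<sigma> > 0"
    and "0 \<le> \<beta>" and "\<beta> \<le> 1" and "1/2 \<le> \<xi>"
    and dp: "distributed M lborel p (normal_density \<mu> \<sigma>)"
    and dq: "distributed M lborel pS (normal_density \<mu> \<sigma>)"
    and ind: "prob_space.indep_var M borel p borel pS"
    and "0 \<le> t" "0 \<le> l"
  shows "WP M \<beta> \<xi> p pS t l = - (\<sigma>\<^sup>2 * Rf \<beta> \<xi> (etaS t l))"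
proof -
  interpret prob_space M by fact
  define e where "e = etaS t l"
  have e0: "0 < e" unfolding e_def etaS_def by simp
  have e1: "e \<le> 1" unfolding e_def etaS_def using assms by (simp add: mult_nonneg_nonneg)
  define a where "a = e * (1-\<beta>) + (1-e) * (2*\<xi>-1)"
  define b where "b = e * \<beta>"
  define c where "c = (1-e) * (1-\<xi>)"
  have pb: "pbar \<beta> \<xi> t l p pS = (\<lambda>\<omega>. a * p \<omega> + b * pS \<omega> + c)"
    unfolding pbar_def a_def b_def c_def e_def[symmetric] by (simp add: fun_eq_iff algebra_simps)
  have D: "a\<^sup>2 + b\<^sup>2 > 0" using Dpos[of \<beta> \<xi> e] assms e0 e1 unfolding a_def b_def by auto
  have "WP M \<beta> \<xi> p pS t l = - (\<sigma>\<^sup>2 * b\<^sup>2 / (a\<^sup>2 + b\<^sup>2))"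
    unfolding WP_def pb using mse[OF \<sigma> dp dq ind D, of c] by simp
  also have "\<dots> = - (\<sigma>\<^sup>2 * Rf \<beta> \<xi> e)" unfolding Rf_def a_def b_def by simp
  finally show ?thesis unfolding e_def .
qed

lemma etaS_anti_t: "0 \<le> l \<Longrightarrow> t1 \<le> t2 \<Longrightarrow> etaS t2 l \<le> etaS t1 l"
  unfolding etaS_def by (simp add: mult_left_mono)
lemma etaS_santi_t: "0 < l \<Longrightarrow> t1 < t2 \<Longrightarrow> etaS t2 l < etaS t1 l"
  unfolding etaS_def by simp
lemma etaS_anti_l: "0 \<le> t \<Longrightarrow> l1 \<le> l2 \<Longrightarrow> etaS t l2 \<le> etaS t l1"
  unfolding etaS_def by (simp add: mult_right_mono)
lemma etaS_santi_l: "0 < t \<Longrightarrow> l1 < l2 \<Longrightarrow> etaS t l2 < etaS t l1"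
  unfolding etaS_def by simp
lemma etaS_pos: "0 < etaS t l" unfolding etaS_def by simp
lemma etaS_le1: "0 \<le> t \<Longrightarrow> 0 \<le> l \<Longrightarrow> etaS t l \<le> 1" unfolding etaS_def by (simp add: mult_nonneg_nonneg)

theorem proposition1:
  fixes M :: "'a measure" and p pS :: "'a \<Rightarrow> real"
    and \<mu> \<sigma> \<beta> \<xi> :: real
  assumes "prob_space M"
    and "\<sigma> > 0"
    and "0 \<le> \<beta>" and "\<beta> \<le> 1"
    and "1/2 \<le> \<xi>" and "\<xi> \<le> 1"
    and "distributed M lborel p (normal_density \<mu> \<sigma>)"
    and "distributed M lborel pS (normal_density \<mu> \<sigma>)"
    and "prob_space.indep_var M borel p borel pS"
  shows "(\<forall>l>0. mono_on {0..} (\<lambda>t. WP M \<beta> \<xi> p pS t l))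
       \<and> (\<forall>t\<ge>0. mono_on {0<..} (\<lambda>l. WP M \<beta> \<xi> p pS t l))
       \<and> (\<beta> > 0 \<and> \<xi> > 1/2 \<longrightarrow>
            (\<forall>l>0. strict_mono_on {0..} (\<lambda>t. WP M \<beta> \<xi> p pS t l))
          \<and> (\<forall>t>0. strict_mono_on {0<..} (\<lambda>l. WP M \<beta> \<xi> p pS t l)))"
proof -
  note W = WP_val[OF assms(1,2,3,4,5,7,8,9)]
  have sq: "\<sigma>\<^sup>2 > 0" using assms(2) by simp
  note R = Rf_mono[OF assms(3,4,5,6)]
  have c1: "mono_on {0..} (\<lambda>t. WP M \<beta> \<xi> p pS t l)" if l: "l > 0" for l
  proof (rule mono_onI)
    fix r s :: real assume rs: "r \<in> {0..}" "s \<in> {0..}" "r \<le> s"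
    have e: "etaS s l \<le> etaS r l" using l rs by (intro etaS_anti_t) auto
    have "Rf \<beta> \<xi> (etaS s l) \<le> Rf \<beta> \<xi> (etaS r l)"
      using R(1)[OF etaS_pos e etaS_le1] l rs by auto
    then show "WP M \<beta> \<xi> p pS r l \<le> WP M \<beta> \<xi> p pS s l"
      using W[of r l] W[of s l] l rs sq by (simp add: mult_left_mono)
  qed
  have c2: "mono_on {0<..} (\<lambda>l. WP M \<beta> \<xi> p pS t l)" if t: "t \<ge> 0" for t
  proof (rule mono_onI)
    fix r s :: real assume rs: "r \<in> {0<..}" "s \<in> {0<..}" "r \<le> s"
    have e: "etaS t s \<le> etaS t r" using t rs by (intro etaS_anti_l) auto
    have "Rf \<beta> \<xi> (etaS t s) \<le> Rf \<beta> \<xi> (etaS t r)"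
      using R(1)[OF etaS_pos e etaS_le1] t rs by auto
    then show "WP M \<beta> \<xi> p pS t r \<le> WP M \<beta> \<xi> p pS t s"
      using W[of t r] W[of t s] t rs sq by (simp add: mult_left_mono)
  qed
  have c3: "strict_mono_on {0..} (\<lambda>t. WP M \<beta> \<xi> p pS t l)" if l: "l > 0" and h: "\<beta> > 0" "\<xi> > 1/2" for l
  proof (rule strict_mono_onI)
    fix r s :: real assume rs: "r \<in> {0..}" "s \<in> {0..}" "r < s"
    have e: "etaS s l < etaS r l" using l rs by (intro etaS_santi_t) auto
    have "Rf \<beta> \<xi> (etaS s l) < Rf \<beta> \<xi> (etaS r l)"
      using R(2)[OF etaS_pos less_imp_le[OF e] etaS_le1 h e] l rs by auto
    then show "WP M \<beta> \<xi> p pS r l < WP M \<beta> \<xi> p pS s l"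
      using W[of r l] W[of s l] l rs sq by simp
  qed
  have c4: "strict_mono_on {0<..} (\<lambda>l. WP M \<beta> \<xi> p pS t l)" if t: "t > 0" and h: "\<beta> > 0" "\<xi> > 1/2" for t
  proof (rule strict_mono_onI)
    fix r s :: real assume rs: "r \<in> {0<..}" "s \<in> {0<..}" "r < s"
    have e: "etaS t s < etaS t r" using t rs by (intro etaS_santi_l) auto
    have "Rf \<beta> \<xi> (etaS t s) < Rf \<beta> \<xi> (etaS t r)"
      using R(2)[OF etaS_pos less_imp_le[OF e] etaS_le1 h e] t rs by auto
    then show "WP M \<beta> \<xi> p pS t r < WP M \<beta> \<xi> p pS t s"
      using W[of t r] W[of t s] t rs sq by simp
  qed
  show ?thesis using c1 c2 c3 c4 by blast
qed


end
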